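(* Let $k$ be a field of characteristic $\neq 2$, let $\mathcal O$ be the Lie algebra described in the context, and let $\mathcal I$ be a closed ideal of $\mathcal O$ with $J=J_{\mathcal I}=q(t)k[t]\neq 0$. Put $w_i=v_iq(t)$, $i=0,1,2$. Then $\mathcal I$ is one of the following ideals: (a) $\mathcal I=\mathcal OJt(t-1)\oplus k(w_0t\pm w_1t)\oplus k(w_0(t-1)\pm w_2(t-1))$ (four possibilities, the two signs chosen independently); (b) $\mathcal I=\mathcal OJt(t-1)\oplus\bigl(\bigoplus_{i=0}^2kw_it\bigr)\oplus k(w_0(t-1)\pm w_2(t-1))$ (two possibilities); in this case $\mathcal I=\mathcal OJt\oplus k(w_0\pm w_2)$; (c) $\mathcal I=\mathcal OJt(t-1)\oplus k(w_0t\pm w_1t)\oplus\bigl(\bigoplus_{i=0}^2kw_i(t-1)\bigr)$ (two possibilities); in this case $\mathcal I=\mathcal OJ(t-1)\oplus k(w_0\pm w_1)$; (d) $\mathcal I=\mathcal OJ$.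
   Context: $\mathcal O$ is the Lie algebra over $k$ which is a free $k[t]$-module with basis $v_0,v_1,v_2$, with $k[t]$-bilinear bracket determined by $[v_0,v_1]=-v_2(t-1)$, $[v_1,v_2]=-v_0$, $[v_2,v_0]=v_1t$ (it is isomorphic to the Onsager algebra). An ideal $\mathcal I$ of $\mathcal O$ is closed if $\{x\in\mathcal O:[x,\mathcal O]\subseteq\mathcal I\}=\mathcal I$. For an ideal $\mathcal I$, $J_{\mathcal I}=\{p(t)\in k[t]: v_0p(t)+v_1p_1(t)+v_2p_2(t)\in\mathcal I\text{ for some }p_1,p_2\in k[t]\}$ (an ideal of $k[t]$). For an ideal $J$ of $k[t]$, $\mathcal OJ=v_0J\oplus v_1J\oplus v_2J$, and $\mathcal OJt$, $\mathcal OJ(t-1)$, $\mathcal OJt(t-1)$ denote $\mathcal O$ applied to the ideals $Jt$, $J(t-1)$, $Jt(t-1)$. *)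

theory Defs
  imports "HOL-Computational_Algebra.Polynomial"
begin

text \<open>Elements of the Onsager-type Lie algebra O: triples (p0,p1,p2) standing for
  v0 p0 + v1 p1 + v2 p2, a free k[t]-module with basis v0, v1, v2.\<close>

type_synonym 'a onsager = "'a poly \<times> 'a poly \<times> 'a poly"

definition tt :: "'a::comm_ring_1 poly" where "tt = [:0, 1:]"

definition oadd :: "'a::comm_ring_1 onsager \<Rightarrow> 'a onsager \<Rightarrow> 'a onsager" where
  "oadd x y = (fst x + fst y, fst (snd x) + fst (snd y), snd (snd x) + snd (snd y))"

definition oscale :: "'a::comm_ring_1 \<Rightarrow> 'a onsager \<Rightarrow> 'a onsager" where
  "oscale c x = (smult c (fst x), smult c (fst (snd x)), smult c (snd (snd x)))"

definition ozero :: "'a::comm_ring_1 onsager" where "ozero = (0, 0, 0)"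

text \<open>k[t]-bilinear bracket with [v0,v1] = -v2(t-1), [v1,v2] = -v0, [v2,v0] = v1 t.\<close>
definition obr :: "'a::comm_ring_1 onsager \<Rightarrow> 'a onsager \<Rightarrow> 'a onsager" where
  "obr x y = (case x of (a0, a1, a2) \<Rightarrow> case y of (b0, b1, b2) \<Rightarrow>
     ( - (a1 * b2 - a2 * b1),
       tt * (a2 * b0 - a0 * b2),
       - ((tt - 1) * (a0 * b1 - a1 * b0))))"

definition lie_ideal :: "'a::comm_ring_1 onsager set \<Rightarrow> bool" where
  "lie_ideal I \<longleftrightarrow> ozero \<in> I \<and> (\<forall>x\<in>I. \<forall>y\<in>I. oadd x y \<in> I) \<and>
     (\<forall>c. \<forall>x\<in>I. oscale c x \<in> I) \<and> (\<forall>x\<in>I. \<forall>y. obr x y \<in> I)"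

definition closed_ideal :: "'a::comm_ring_1 onsager set \<Rightarrow> bool" where
  "closed_ideal I \<longleftrightarrow> lie_ideal I \<and> {x. \<forall>y. obr x y \<in> I} = I"

definition J_of :: "'a::comm_ring_1 onsager set \<Rightarrow> 'a poly set" where
  "J_of I = {p. \<exists>p1 p2. (p, p1, p2) \<in> I}"

definition pideal :: "'a::comm_ring_1 poly \<Rightarrow> 'a poly set" where
  "pideal p = {p * r | r. True}"

definition OJ :: "'a::comm_ring_1 poly set \<Rightarrow> 'a onsager set" where
  "OJ J = {(a, b, c) | a b c. a \<in> J \<and> b \<in> J \<and> c \<in> J}"

definition osum :: "'a::comm_ring_1 onsager set \<Rightarrow> 'a onsager set \<Rightarrow> 'a onsager set" where
  "osum A B = {oadd x y | x y. x \<in> A \<and> y \<in> B}"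

definition kspan :: "'a::comm_ring_1 onsager \<Rightarrow> 'a onsager set" where
  "kspan w = {oscale c w | c. True}"

end

theory Submission
  imports Defs
begin


definition pmul :: "'a::comm_ring_1 poly \<Rightarrow> 'a onsager \<Rightarrow> 'a onsager" where
  "pmul p x = (p * fst x, p * fst (snd x), p * snd (snd x))"

definition cvec :: "'a::comm_ring_1 poly \<Rightarrow> 'a \<times> 'a \<times> 'a \<Rightarrow> 'a onsager" where
  "cvec p a = (smult (fst a) p, smult (fst (snd a)) p, smult (snd (snd a)) p)"

definition ev :: "'a::comm_ring_1 \<Rightarrow> 'a onsager \<Rightarrow> 'a \<times> 'a \<times> 'a" where
  "ev s f = (poly (fst f) s, poly (fst (snd f)) s, poly (snd (snd f)) s)"

definition brs :: "'a::comm_ring_1 \<Rightarrow> 'a \<times> 'a \<times> 'a \<Rightarrow> 'a \<times> 'a \<times> 'a \<Rightarrow> 'a \<times> 'a \<times> 'a" where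
  "brs s a b = (case a of (a0, a1, a2) \<Rightarrow> case b of (b0, b1, b2) \<Rightarrow>
     ( - (a1 * b2 - a2 * b1), s * (a2 * b0 - a0 * b2), - ((s - 1) * (a0 * b1 - a1 * b0))))"

definition vadd :: "'a::comm_ring_1 \<times> 'a \<times> 'a \<Rightarrow> 'a \<times> 'a \<times> 'a \<Rightarrow> 'a \<times> 'a \<times> 'a" where
  "vadd x y = (fst x + fst y, fst (snd x) + fst (snd y), snd (snd x) + snd (snd y))"

definition vsc :: "'a::comm_ring_1 \<Rightarrow> 'a \<times> 'a \<times> 'a \<Rightarrow> 'a \<times> 'a \<times> 'a" where
  "vsc c x = (c * fst x, c * fst (snd x), c * snd (snd x))"

definition VV :: "'a::comm_ring_1 poly \<Rightarrow> (('a \<times> 'a \<times> 'a) \<times> ('a \<times> 'a \<times> 'a)) set \<Rightarrow> 'a onsager set" where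
  "VV q S = {pmul q f | f. (ev 0 f, ev 1 f) \<in> S}"

lemma poly_tt[simp]: "poly tt s = s" by (simp add: tt_def)

lemma obr_pmul_left: "obr (pmul p x) y = pmul p (obr x y)"
  by (cases x; cases y) (simp add: obr_def pmul_def algebra_simps)

lemma obr_pmul_right: "obr x (pmul p y) = pmul p (obr x y)"
  by (cases x; cases y) (simp add: obr_def pmul_def algebra_simps)

lemma ev_obr: "ev s (obr f y) = brs s (ev s f) (ev s y)"
  by (cases f; cases y) (simp add: obr_def brs_def ev_def algebra_simps)

lemma root2:
  fixes g :: "'a::field poly"
  assumes "poly g 0 = 0" "poly g 1 = 0"
  shows "\<exists>h. g = tt * (tt - 1) * h"
proof -
  from assms(1) have "[:-0,1:] dvd g" by (simp only: poly_eq_0_iff_dvd)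
  then obtain h1 where h1: "g = tt * h1" by (auto simp: tt_def)
  from assms(2) h1 have "poly h1 1 = 0" by simp
  then have "[:-1,1:] dvd h1" by (simp only: poly_eq_0_iff_dvd)
  moreover have "[:-1,1:] = (tt - 1 :: 'a poly)" by (simp add: tt_def one_pCons)
  ultimately obtain h where "h1 = (tt - 1) * h" by (auto elim: dvdE)
  with h1 show ?thesis by (auto simp: mult.assoc)
qed

lemma oadd_assoc: "oadd x (oadd y z) = oadd (oadd x y) z"
  by (simp add: oadd_def add.assoc)

lemma osum_assoc: "osum A (osum B C) = osum (osum A B) C"
proof (rule set_eqI, rule iffI)
  fix x assume "x \<in> osum A (osum B C)"
  then obtain a b c where "a \<in> A" "b \<in> B" "c \<in> C" "x = oadd a (oadd b c)"
    unfolding osum_def by blast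
  then show "x \<in> osum (osum A B) C" unfolding osum_def oadd_assoc by blast
next
  fix x assume "x \<in> osum (osum A B) C"
  then obtain a b c where "a \<in> A" "b \<in> B" "c \<in> C" "x = oadd (oadd a b) c"
    unfolding osum_def by blast
  then show "x \<in> osum A (osum B C)" unfolding osum_def oadd_assoc[symmetric] by blast
qed

locale ctx =
  fixes I :: "('a::field) onsager set" and q :: "'a poly"
  assumes cl: "closed_ideal I"
    and J: "J_of I = pideal q"
    and nz: "pideal q \<noteq> {0}"
begin

lemma qnz: "q \<noteq> 0"
  using nz unfolding pideal_def by auto

lemma lid: "lie_ideal I" using cl unfolding closed_ideal_def by blast

lemma I_add: "x \<in> I \<Longrightarrow> y \<in> I \<Longrightarrow> oadd x y \<in> I"
  using lid unfolding lie_ideal_def by blast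
lemma I_scale: "x \<in> I \<Longrightarrow> oscale c x \<in> I"
  using lid unfolding lie_ideal_def by blast
lemma I_br: "x \<in> I \<Longrightarrow> obr x y \<in> I"
  using lid unfolding lie_ideal_def by blast
lemma I_zero: "ozero \<in> I"
  using lid unfolding lie_ideal_def by blast
lemma I_closed: "(\<And>y. obr x y \<in> I) \<Longrightarrow> x \<in> I"
  using cl unfolding closed_ideal_def by blast

lemma I_pmul: "x \<in> I \<Longrightarrow> pmul p x \<in> I"
  by (rule I_closed) (simp add: obr_pmul_left obr_pmul_right[symmetric] I_br)

lemma I_J: "x \<in> I \<Longrightarrow> fst x \<in> pideal q"
  using J unfolding J_of_def by (cases x) auto

lemma I_OJ: assumes "x \<in> I" shows "\<exists>f. x = pmul q f"
proof -
  obtain a0 a1 a2 where x: "x = (a0, a1, a2)" by (cases x) auto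
  have "obr x (0, 0, -1) \<in> I" using assms by (rule I_br)
  then have "a1 \<in> pideal q" using I_J by (fastforce simp: x obr_def)
  moreover have "obr x (0, 1, 0) \<in> I" using assms by (rule I_br)
  then have "a2 \<in> pideal q" using I_J by (fastforce simp: x obr_def)
  moreover have "a0 \<in> pideal q" using I_J assms x by fastforce
  ultimately obtain r0 r1 r2 where "a0 = q * r0" "a1 = q * r1" "a2 = q * r2"
    unfolding pideal_def by blast
  then have "x = pmul q (r0, r1, r2)" by (simp add: x pmul_def)
  then show ?thesis by blast
qed

lemma q_el: "\<exists>p1 p2. (q, p1, p2) \<in> I"
proof -
  have "q \<in> pideal q" unfolding pideal_def by (auto intro: exI[of _ 1])
  then show ?thesis using J unfolding J_of_def by blast
qed

lemma M2: "(0, 0, q * tt * (tt - 1) * r) \<in> I"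
proof -
  obtain p1 p2 where x: "(q, p1, p2) \<in> I" using q_el by blast
  have "obr (obr (q, p1, p2) (0, 0, 1)) (-r, 0, 0) \<in> I" using x by (intro I_br)
  then show ?thesis by (simp add: obr_def algebra_simps)
qed

lemma M1: "(0, q * tt * (tt - 1) * r, 0) \<in> I"
proof -
  obtain p1 p2 where x: "(q, p1, p2) \<in> I" using q_el by blast
  have "obr (obr (q, p1, p2) (0, 1, 0)) (-r, 0, 0) \<in> I" using x by (intro I_br)
  then show ?thesis by (simp add: obr_def algebra_simps)
qed

lemma M0: "(q * tt * (tt - 1) * r, 0, 0) \<in> I"
proof -
  have "obr (0, q * tt * (tt - 1) * r, 0) (0, 0, -1) \<in> I" using M1 by (intro I_br)
  then show ?thesis by (simp add: obr_def algebra_simps)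
qed

lemma Mmem:
  assumes "ev 0 g = (0, 0, 0)" "ev 1 g = (0, 0, 0)"
  shows "pmul q g \<in> I"
proof -
  obtain g0 g1 g2 where g: "g = (g0, g1, g2)" by (cases g) auto
  from assms have "poly g0 0 = 0" "poly g0 1 = 0" "poly g1 0 = 0" "poly g1 1 = 0"
     "poly g2 0 = 0" "poly g2 1 = 0" by (simp_all add: g ev_def)
  then obtain h0 h1 h2 where h: "g0 = tt * (tt - 1) * h0" "g1 = tt * (tt - 1) * h1"
     "g2 = tt * (tt - 1) * h2"
    using root2 by meson
  have "oadd (q * tt * (tt - 1) * h0, 0, 0) (oadd (0, q * tt * (tt - 1) * h1, 0) (0, 0, q * tt * (tt - 1) * h2)) \<in> I"
    by (intro I_add M0 M1 M2)
  then show ?thesis by (simp add: g h pmul_def oadd_def mult.assoc)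
qed

definition A0 where "A0 = {a. pmul q (cvec (1 - tt) a) \<in> I}"
definition A1 where "A1 = {a. pmul q (cvec tt a) \<in> I}"

lemma MemI: "pmul q f \<in> I \<longleftrightarrow> ev 0 f \<in> A0 \<and> ev 1 f \<in> A1"
proof -
  obtain f0 f1 f2 where f: "f = (f0, f1, f2)" by (cases f) auto
  show ?thesis
  proof
    assume H: "pmul q f \<in> I"
    define g where "g = (smult (poly f0 0) (1 - tt) - (1 - tt) * f0,
       smult (poly f1 0) (1 - tt) - (1 - tt) * f1, smult (poly f2 0) (1 - tt) - (1 - tt) * f2)"
    have g0: "pmul q g \<in> I" by (rule Mmem) (simp_all add: g_def ev_def)
    have "oadd (pmul (1 - tt) (pmul q f)) (pmul q g) \<in> I" by (rule I_add[OF I_pmul[OF H] g0])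
    moreover have "oadd (pmul (1 - tt) (pmul q f)) (pmul q g) = pmul q (cvec (1 - tt) (ev 0 f))"
      by (simp add: f g_def pmul_def oadd_def cvec_def ev_def algebra_simps)
    ultimately have a: "ev 0 f \<in> A0" unfolding A0_def by simp
    define g' where "g' = (smult (poly f0 1) tt - tt * f0,
       smult (poly f1 1) tt - tt * f1, smult (poly f2 1) tt - tt * f2)"
    have g1: "pmul q g' \<in> I" by (rule Mmem) (simp_all add: g'_def ev_def)
    have "oadd (pmul tt (pmul q f)) (pmul q g') \<in> I" by (rule I_add[OF I_pmul[OF H] g1])
    moreover have "oadd (pmul tt (pmul q f)) (pmul q g') = pmul q (cvec tt (ev 1 f))"
      by (simp add: f g'_def pmul_def oadd_def cvec_def ev_def algebra_simps)
    ultimately have b: "ev 1 f \<in> A1" unfolding A1_def by simp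
    from a b show "ev 0 f \<in> A0 \<and> ev 1 f \<in> A1" ..
  next
    assume H: "ev 0 f \<in> A0 \<and> ev 1 f \<in> A1"
    define g where "g = (f0 - smult (poly f0 0) (1 - tt) - smult (poly f0 1) tt,
       f1 - smult (poly f1 0) (1 - tt) - smult (poly f1 1) tt,
       f2 - smult (poly f2 0) (1 - tt) - smult (poly f2 1) tt)"
    have g0: "pmul q g \<in> I" by (rule Mmem) (simp_all add: g_def ev_def)
    have "oadd (oadd (pmul q (cvec (1 - tt) (ev 0 f))) (pmul q (cvec tt (ev 1 f)))) (pmul q g) \<in> I"
      using H g0 unfolding A0_def A1_def by (intro I_add) auto
    moreover have "oadd (oadd (pmul q (cvec (1 - tt) (ev 0 f))) (pmul q (cvec tt (ev 1 f)))) (pmul q g) = pmul q f"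
      by (simp add: f g_def pmul_def oadd_def cvec_def ev_def algebra_simps)
    ultimately show "pmul q f \<in> I" by simp
  qed
qed

lemma ev_cvec[simp]: "ev s (cvec p a) = vsc (poly p s) a"
  by (simp add: ev_def cvec_def vsc_def)

lemma zA0: "(0, 0, 0) \<in> A0"
  using I_zero by (simp add: A0_def cvec_def pmul_def ozero_def)
lemma zA1: "(0, 0, 0) \<in> A1"
  using I_zero by (simp add: A1_def cvec_def pmul_def ozero_def)

lemma brs_zero[simp]: "brs s (0,0,0) b = (0,0,0)"
  by (cases b) (simp add: brs_def)

lemma A0_br: "a \<in> A0 \<Longrightarrow> brs 0 a b \<in> A0"
proof -
  assume a: "a \<in> A0"
  have "obr (pmul q (cvec (1 - tt) a)) (cvec (1 - tt) b) \<in> I"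
    using a unfolding A0_def by (intro I_br) simp
  then have "pmul q (obr (cvec (1 - tt) a) (cvec (1 - tt) b)) \<in> I" by (simp add: obr_pmul_left)
  then have "ev 0 (obr (cvec (1 - tt) a) (cvec (1 - tt) b)) \<in> A0" using MemI by blast
  then show ?thesis by (simp add: ev_obr vsc_def)
qed

lemma A1_br: "a \<in> A1 \<Longrightarrow> brs 1 a b \<in> A1"
proof -
  assume a: "a \<in> A1"
  have "obr (pmul q (cvec tt a)) (cvec tt b) \<in> I"
    using a unfolding A1_def by (intro I_br) simp
  then have "pmul q (obr (cvec tt a) (cvec tt b)) \<in> I" by (simp add: obr_pmul_left)
  then have "ev 1 (obr (cvec tt a) (cvec tt b)) \<in> A1" using MemI by blast
  then show ?thesis by (simp add: ev_obr vsc_def)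
qed

lemma A0_cl: "(\<And>b. brs 0 a b \<in> A0) \<Longrightarrow> a \<in> A0"
proof -
  assume H: "\<And>b. brs 0 a b \<in> A0"
  have "pmul q (cvec (1 - tt) a) \<in> I"
  proof (rule I_closed)
    fix y
    have "pmul q (obr (cvec (1 - tt) a) y) \<in> I"
      unfolding MemI by (simp add: ev_obr vsc_def H zA1)
    then show "obr (pmul q (cvec (1 - tt) a)) y \<in> I" by (simp add: obr_pmul_left)
  qed
  then show ?thesis unfolding A0_def by simp
qed

lemma A1_cl: "(\<And>b. brs 1 a b \<in> A1) \<Longrightarrow> a \<in> A1"
proof -
  assume H: "\<And>b. brs 1 a b \<in> A1"
  have "pmul q (cvec tt a) \<in> I"
  proof (rule I_closed)
    fix y
    have "pmul q (obr (cvec tt a) y) \<in> I"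
      unfolding MemI by (simp add: ev_obr vsc_def H zA0)
    then show "obr (pmul q (cvec tt a)) y \<in> I" by (simp add: obr_pmul_left)
  qed
  then show ?thesis unfolding A1_def by simp
qed

lemma A0_add: "(a0,a1,a2) \<in> A0 \<Longrightarrow> (b0,b1,b2) \<in> A0 \<Longrightarrow> (a0+b0,a1+b1,a2+b2) \<in> A0"
proof -
  assume "(a0,a1,a2) \<in> A0" "(b0,b1,b2) \<in> A0"
  then have "oadd (pmul q (cvec (1 - tt) (a0,a1,a2))) (pmul q (cvec (1 - tt) (b0,b1,b2))) \<in> I"
    unfolding A0_def by (intro I_add) auto
  moreover have "oadd (pmul q (cvec (1 - tt) (a0,a1,a2))) (pmul q (cvec (1 - tt) (b0,b1,b2))) = pmul q (cvec (1 - tt) (a0+b0,a1+b1,a2+b2))"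
    by (simp add: pmul_def cvec_def oadd_def algebra_simps smult_add_left)
  ultimately show ?thesis unfolding A0_def by simp
qed
lemma A1_add: "(a0,a1,a2) \<in> A1 \<Longrightarrow> (b0,b1,b2) \<in> A1 \<Longrightarrow> (a0+b0,a1+b1,a2+b2) \<in> A1"
proof -
  assume "(a0,a1,a2) \<in> A1" "(b0,b1,b2) \<in> A1"
  then have "oadd (pmul q (cvec tt (a0,a1,a2))) (pmul q (cvec tt (b0,b1,b2))) \<in> I"
    unfolding A1_def by (intro I_add) auto
  moreover have "oadd (pmul q (cvec tt (a0,a1,a2))) (pmul q (cvec tt (b0,b1,b2))) = pmul q (cvec tt (a0+b0,a1+b1,a2+b2))"
    by (simp add: pmul_def cvec_def oadd_def algebra_simps smult_add_left)
  ultimately show ?thesis unfolding A1_def by simp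
qed
lemma A0_sc: "(a0,a1,a2) \<in> A0 \<Longrightarrow> (c*a0,c*a1,c*a2) \<in> A0"
proof -
  assume "(a0,a1,a2) \<in> A0"
  then have "oscale c (pmul q (cvec (1 - tt) (a0,a1,a2))) \<in> I"
    unfolding A0_def by (intro I_scale) auto
  moreover have "oscale c (pmul q (cvec (1 - tt) (a0,a1,a2))) = pmul q (cvec (1 - tt) (c*a0,c*a1,c*a2))"
    by (simp add: pmul_def cvec_def oscale_def algebra_simps)
  ultimately show ?thesis unfolding A0_def by simp
qed
lemma A1_sc: "(a0,a1,a2) \<in> A1 \<Longrightarrow> (c*a0,c*a1,c*a2) \<in> A1"
proof -
  assume "(a0,a1,a2) \<in> A1"
  then have "oscale c (pmul q (cvec tt (a0,a1,a2))) \<in> I"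
    unfolding A1_def by (intro I_scale) auto
  moreover have "oscale c (pmul q (cvec tt (a0,a1,a2))) = pmul q (cvec tt (c*a0,c*a1,c*a2))"
    by (simp add: pmul_def cvec_def oscale_def algebra_simps)
  ultimately show ?thesis unfolding A1_def by simp
qed

lemma A_ex: "\<exists>a1 a2. (1, a1, a2) \<in> A0" "\<exists>a1 a2. (1, a1, a2) \<in> A1"
proof -
  obtain p1 p2 where x: "(q, p1, p2) \<in> I" using q_el by blast
  then obtain f where f: "(q, p1, p2) = pmul q f" using I_OJ by blast
  then have "q * fst f = q * 1" by (simp add: pmul_def)
  then have f1: "fst f = 1" using qnz by simp
  from x f have "ev 0 f \<in> A0" "ev 1 f \<in> A1" using MemI by auto
  then show "\<exists>a1 a2. (1, a1, a2) \<in> A0" "\<exists>a1 a2. (1, a1, a2) \<in> A1"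
    using f1 by (auto simp: ev_def)
qed

end



lemma cls0:
  fixes A :: "('a::field \<times> 'a \<times> 'a) set"
  assumes add: "\<And>a0 a1 a2 b0 b1 b2. (a0,a1,a2) \<in> A \<Longrightarrow> (b0,b1,b2) \<in> A \<Longrightarrow> (a0+b0,a1+b1,a2+b2) \<in> A"
    and sc: "\<And>a0 a1 a2 c. (a0,a1,a2) \<in> A \<Longrightarrow> (c*a0,c*a1,c*a2) \<in> A"
    and br: "\<And>a b. a \<in> A \<Longrightarrow> brs 0 a b \<in> A"
    and cl: "\<And>a. (\<And>b. brs 0 a b \<in> A) \<Longrightarrow> a \<in> A"
    and ex: "\<exists>a1 a2. (1,a1,a2) \<in> A"
  shows "A = UNIV \<or> (\<exists>s\<in>{1,-1}. A = {(c, 0, c*s) | c. True})"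
proof -
  have sc': "(x,y,z) \<in> A" if "(a0,a1,a2) \<in> A" "x = c*a0" "y = c*a1" "z = c*a2" for a0 a1 a2 c x y z
    using sc[OF that(1)] that by simp
  have add': "(x,y,z) \<in> A" if "(a0,a1,a2) \<in> A" "(b0,b1,b2) \<in> A" "x = a0+b0" "y = a1+b1" "z = a2+b2"
    for a0 a1 a2 b0 b1 b2 x y z
    using add[OF that(1,2)] that by simp
  have full: "A = UNIV" if e0: "(1,0,0) \<in> A" and e2: "(0,0,1) \<in> A"
  proof -
    have e1: "(0,1,0) \<in> A"
    proof (rule cl)
      fix b :: "'a \<times> 'a \<times> 'a"
      obtain b0 b1 b2 where b: "b = (b0,b1,b2)" by (cases b) auto
      have "(-b2, 0, 0) \<in> A" by (rule sc'[OF e0]) auto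
      moreover have "(0, 0, -b0) \<in> A" by (rule sc'[OF e2]) auto
      ultimately have "(-b2, 0, -b0) \<in> A" by (rule add') auto
      then show "brs 0 (0,1,0) b \<in> A" by (simp add: b brs_def)
    qed
    show ?thesis
    proof (rule set_eqI, rule iffI)
      fix x :: "'a \<times> 'a \<times> 'a"
      obtain x0 x1 x2 where x: "x = (x0,x1,x2)" by (cases x) auto
      have "(x0, 0, 0) \<in> A" by (rule sc'[OF e0]) auto
      moreover have "(0, x1, 0) \<in> A" by (rule sc'[OF e1]) auto
      ultimately have "(x0, x1, 0) \<in> A" by (rule add') auto
      moreover have "(0, 0, x2) \<in> A" by (rule sc'[OF e2]) auto
      ultimately have "(x0, x1, x2) \<in> A" by (rule add') auto
      then show "x \<in> A" by (simp add: x)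
    qed simp
  qed
  have full2: "A = UNIV" if h1: "(0,0,c) \<in> A" "c \<noteq> 0" and h2: "(d,0,e) \<in> A" "d \<noteq> 0" for c d e
  proof -
    have e2: "(0,0,1) \<in> A" using sc'[OF h1(1), where c = "inverse c"] h1(2) by simp
    have "(0,0,-e) \<in> A" by (rule sc'[OF e2]) auto
    then have d0: "(d,0,0) \<in> A" by (rule add'[OF h2(1)]) auto
    have "(1,0,0) \<in> A" using sc'[OF d0, where c = "inverse d"] h2(2) by simp
    then show ?thesis using full e2 by blast
  qed
  from ex obtain a1 a2 where a: "(1,a1,a2) \<in> A" by blast
  show ?thesis
  proof (cases "a1 = 0")
    case False
    have "brs 0 (1,a1,a2) (1,0,0) \<in> A" by (rule br[OF a])
    then have x: "(0,0,-a1) \<in> A" by (simp add: brs_def)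
    have "brs 0 (1,a1,a2) (0,0,1) \<in> A" by (rule br[OF a])
    then have y: "(-a1,0,0) \<in> A" by (simp add: brs_def)
    show ?thesis using full2[OF x _ y] False by simp
  next
    case True
    have "brs 0 (1,a1,a2) (0,1,0) \<in> A" by (rule br[OF a])
    then have a': "(a2,0,1) \<in> A" by (simp add: brs_def True)
    have a0': "(1,0,a2) \<in> A" using a True by simp
    have "(-a2,0,-a2*a2) \<in> A" using sc'[OF a, where c = "-a2"] True by simp
    then have z: "(0,0,1 - a2*a2) \<in> A" by (rule add'[OF a']) auto
    show ?thesis
    proof (cases "1 - a2*a2 = 0")
      case False
      then show ?thesis using full2[OF z False] a by (simp add: True)
    next
      case sq: True
      then have "(a2 - 1) * (a2 + 1) = 0" by (simp add: algebra_simps)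
      then have s: "a2 \<in> {1, -1}" by (auto simp: add_eq_0_iff2)
      show ?thesis
      proof (cases "A \<subseteq> {(c, 0, c*a2) | c. True}")
        case True
        moreover have "{(c, 0, c*a2) | c. True} \<subseteq> A"
        proof
          fix x :: "'a \<times> 'a \<times> 'a" assume "x \<in> {(c, 0, c*a2) | c. True}"
          then obtain c where "x = (c, 0, c*a2)" by blast
          moreover have "(c, 0, c*a2) \<in> A" using sc'[OF a, where c = c] \<open>a1 = 0\<close> by simp
          ultimately show "x \<in> A" by simp
        qed
        ultimately show ?thesis using s by blast
      next
        case False
        then obtain b0 b1 b2 where b: "(b0,b1,b2) \<in> A" "(b0,b1,b2) \<notin> {(c, 0, c*a2) | c. True}"
          by auto
        show ?thesis
        proof (cases "b1 = 0")
          case False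
          have "brs 0 (b0,b1,b2) (1,0,0) \<in> A" by (rule br[OF b(1)])
          then have "(0,0,-b1) \<in> A" by (simp add: brs_def)
          then show ?thesis using full2[OF _ _ a0'] False by simp
        next
          case True
          with b have ne: "b2 - b0*a2 \<noteq> 0" by auto
          have "(-b0,0,-b0*a2) \<in> A" using sc'[OF a, where c = "-b0"] \<open>a1 = 0\<close> by simp
          then have "(0,0,b2 - b0*a2) \<in> A" by (rule add'[OF b(1)]) (use True in auto)
          then show ?thesis using full2[OF _ ne a0'] by simp
        qed
      qed
    qed
  qed
qed

lemma cls1:
  fixes A :: "('a::field \<times> 'a \<times> 'a) set"
  assumes add: "\<And>a0 a1 a2 b0 b1 b2. (a0,a1,a2) \<in> A \<Longrightarrow> (b0,b1,b2) \<in> A \<Longrightarrow> (a0+b0,a1+b1,a2+b2) \<in> A"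
    and sc: "\<And>a0 a1 a2 c. (a0,a1,a2) \<in> A \<Longrightarrow> (c*a0,c*a1,c*a2) \<in> A"
    and br: "\<And>a b. a \<in> A \<Longrightarrow> brs 1 a b \<in> A"
    and cl: "\<And>a. (\<And>b. brs 1 a b \<in> A) \<Longrightarrow> a \<in> A"
    and ex: "\<exists>a1 a2. (1,a1,a2) \<in> A"
  shows "A = UNIV \<or> (\<exists>s\<in>{1,-1}. A = {(c, c*s, 0) | c. True})"
proof -
  have sc': "(x,y,z) \<in> A" if "(a0,a1,a2) \<in> A" "x = c*a0" "y = c*a1" "z = c*a2" for a0 a1 a2 c x y z
    using sc[OF that(1)] that by simp
  have add': "(x,y,z) \<in> A" if "(a0,a1,a2) \<in> A" "(b0,b1,b2) \<in> A" "x = a0+b0" "y = a1+b1" "z = a2+b2"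
    for a0 a1 a2 b0 b1 b2 x y z
    using add[OF that(1,2)] that by simp
  have full: "A = UNIV" if e0: "(1,0,0) \<in> A" and e1: "(0,1,0) \<in> A"
  proof -
    have e2: "(0,0,1) \<in> A"
    proof (rule cl)
      fix b :: "'a \<times> 'a \<times> 'a"
      obtain b0 b1 b2 where b: "b = (b0,b1,b2)" by (cases b) auto
      have "(b1, 0, 0) \<in> A" by (rule sc'[OF e0]) auto
      moreover have "(0, b0, 0) \<in> A" by (rule sc'[OF e1]) auto
      ultimately have "(b1, b0, 0) \<in> A" by (rule add') auto
      then show "brs 1 (0,0,1) b \<in> A" by (simp add: b brs_def)
    qed
    show ?thesis
    proof (rule set_eqI, rule iffI)
      fix x :: "'a \<times> 'a \<times> 'a"
      obtain x0 x1 x2 where x: "x = (x0,x1,x2)" by (cases x) auto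
      have "(x0, 0, 0) \<in> A" by (rule sc'[OF e0]) auto
      moreover have "(0, x1, 0) \<in> A" by (rule sc'[OF e1]) auto
      ultimately have "(x0, x1, 0) \<in> A" by (rule add') auto
      moreover have "(0, 0, x2) \<in> A" by (rule sc'[OF e2]) auto
      ultimately have "(x0, x1, x2) \<in> A" by (rule add') auto
      then show "x \<in> A" by (simp add: x)
    qed simp
  qed
  have full2: "A = UNIV" if h1: "(0,c,0) \<in> A" "c \<noteq> 0" and h2: "(d,e,0) \<in> A" "d \<noteq> 0" for c d e
  proof -
    have e1: "(0,1,0) \<in> A" using sc'[OF h1(1), where c = "inverse c"] h1(2) by simp
    have "(0,-e,0) \<in> A" by (rule sc'[OF e1]) auto
    then have d0: "(d,0,0) \<in> A" by (rule add'[OF h2(1)]) auto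
    have "(1,0,0) \<in> A" using sc'[OF d0, where c = "inverse d"] h2(2) by simp
    then show ?thesis using full e1 by blast
  qed
  from ex obtain a1 a2 where a: "(1,a1,a2) \<in> A" by blast
  show ?thesis
  proof (cases "a2 = 0")
    case False
    have "brs 1 (1,a1,a2) (1,0,0) \<in> A" by (rule br[OF a])
    then have x: "(0,a2,0) \<in> A" by (simp add: brs_def)
    have "brs 1 (1,a1,a2) (0,1,0) \<in> A" by (rule br[OF a])
    then have y: "(a2,0,0) \<in> A" by (simp add: brs_def)
    show ?thesis using full2[OF x _ y] False by simp
  next
    case True
    have "brs 1 (1,a1,a2) (0,0,1) \<in> A" by (rule br[OF a])
    then have a': "(-a1,-1,0) \<in> A" by (simp add: brs_def True)
    have a0': "(1,a1,0) \<in> A" using a True by simp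
    have "(a1,a1*a1,0) \<in> A" using sc'[OF a0', where c = "a1"] by simp
    then have z: "(0,a1*a1 - 1,0) \<in> A" by (rule add'[OF a']) auto
    show ?thesis
    proof (cases "a1*a1 - 1 = 0")
      case False
      then show ?thesis using full2[OF z False a0'] by simp
    next
      case sq: True
      then have "(a1 - 1) * (a1 + 1) = 0" by (simp add: algebra_simps)
      then have s: "a1 \<in> {1, -1}" by (auto simp: add_eq_0_iff2)
      show ?thesis
      proof (cases "A \<subseteq> {(c, c*a1, 0) | c. True}")
        case True
        moreover have "{(c, c*a1, 0) | c. True} \<subseteq> A"
        proof
          fix x :: "'a \<times> 'a \<times> 'a" assume "x \<in> {(c, c*a1, 0) | c. True}"
          then obtain c where "x = (c, c*a1, 0)" by blast
          moreover have "(c, c*a1, 0) \<in> A" using sc'[OF a0', where c = c] by simp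
          ultimately show "x \<in> A" by simp
        qed
        ultimately show ?thesis using s by blast
      next
        case False
        then obtain b0 b1 b2 where b: "(b0,b1,b2) \<in> A" "(b0,b1,b2) \<notin> {(c, c*a1, 0) | c. True}"
          by auto
        show ?thesis
        proof (cases "b2 = 0")
          case False
          have "brs 1 (b0,b1,b2) (1,0,0) \<in> A" by (rule br[OF b(1)])
          then have "(0,b2,0) \<in> A" by (simp add: brs_def)
          then show ?thesis using full2[OF _ _ a0'] False by simp
        next
          case True
          with b have ne: "b1 - b0*a1 \<noteq> 0" by auto
          have "(-b0,-b0*a1,0) \<in> A" using sc'[OF a0', where c = "-b0"] by simp
          then have "(0,b1 - b0*a1,0) \<in> A" by (rule add'[OF b(1)]) (use True in auto)
          then show ?thesis using full2[OF _ ne a0'] by simp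
        qed
      qed
    qed
  qed
qed



lemma VV_kspan:
  "osum (VV q S) (kspan (pmul q g)) =
     VV q {(a, b). \<exists>c. (vadd a (vsc (-c) (ev 0 g)), vadd b (vsc (-c) (ev 1 g))) \<in> S}"
proof -
  obtain g0 g1 g2 where g: "g = (g0, g1, g2)" by (cases g) auto
  show ?thesis
  proof (rule set_eqI, rule iffI)
    fix x assume "x \<in> osum (VV q S) (kspan (pmul q g))"
    then obtain f c where f: "(ev 0 f, ev 1 f) \<in> S" and x: "x = oadd (pmul q f) (oscale c (pmul q g))"
      unfolding osum_def VV_def kspan_def by blast
    obtain f0 f1 f2 where fe: "f = (f0, f1, f2)" by (cases f) auto
    define f' where "f' = (f0 + smult c g0, f1 + smult c g1, f2 + smult c g2)"
    have x': "x = pmul q f'" by (simp add: x fe g f'_def pmul_def oadd_def oscale_def algebra_simps)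
    have "vadd (ev 0 f') (vsc (-c) (ev 0 g)) = ev 0 f" "vadd (ev 1 f') (vsc (-c) (ev 1 g)) = ev 1 f"
      by (simp_all add: fe g f'_def ev_def vadd_def vsc_def)
    then have "\<exists>c. (vadd (ev 0 f') (vsc (-c) (ev 0 g)), vadd (ev 1 f') (vsc (-c) (ev 1 g))) \<in> S"
      using f by metis
    then have "(ev 0 f', ev 1 f') \<in> {(a, b). \<exists>c. (vadd a (vsc (-c) (ev 0 g)), vadd b (vsc (-c) (ev 1 g))) \<in> S}"
      by simp
    with x' show "x \<in> VV q {(a, b). \<exists>c. (vadd a (vsc (-c) (ev 0 g)), vadd b (vsc (-c) (ev 1 g))) \<in> S}"
      unfolding VV_def by blast
  next
    fix x assume "x \<in> VV q {(a, b). \<exists>c. (vadd a (vsc (-c) (ev 0 g)), vadd b (vsc (-c) (ev 1 g))) \<in> S}"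
    then obtain f c where f: "(vadd (ev 0 f) (vsc (-c) (ev 0 g)), vadd (ev 1 f) (vsc (-c) (ev 1 g))) \<in> S"
      and x: "x = pmul q f"
      unfolding VV_def by blast
    obtain f0 f1 f2 where fe: "f = (f0, f1, f2)" by (cases f) auto
    define f' where "f' = (f0 - smult c g0, f1 - smult c g1, f2 - smult c g2)"
    have x': "x = oadd (pmul q f') (oscale c (pmul q g))"
      by (simp add: x fe g f'_def pmul_def oadd_def oscale_def algebra_simps)
    have "vadd (ev 0 f) (vsc (-c) (ev 0 g)) = ev 0 f'" "vadd (ev 1 f) (vsc (-c) (ev 1 g)) = ev 1 f'"
      by (simp_all add: fe g f'_def ev_def vadd_def vsc_def)
    then have "(ev 0 f', ev 1 f') \<in> S" using f by simp
    then have "pmul q f' \<in> VV q S" unfolding VV_def by blast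
    with x' show "x \<in> osum (VV q S) (kspan (pmul q g))"
      unfolding osum_def kspan_def by blast
  qed
qed

lemma OJ_gen: "OJ (pideal (q * p)) = {pmul q f | f. p dvd fst f \<and> p dvd fst (snd f) \<and> p dvd snd (snd f)}"
proof (rule set_eqI, rule iffI)
  fix x assume "x \<in> OJ (pideal (q * p))"
  then obtain r0 r1 r2 where "x = (q * p * r0, q * p * r1, q * p * r2)"
    unfolding OJ_def pideal_def by blast
  then have "x = pmul q (p * r0, p * r1, p * r2)" by (simp add: pmul_def mult.assoc)
  then show "x \<in> {pmul q f | f. p dvd fst f \<and> p dvd fst (snd f) \<and> p dvd snd (snd f)}" by fastforce
next
  fix x assume "x \<in> {pmul q f | f. p dvd fst f \<and> p dvd fst (snd f) \<and> p dvd snd (snd f)}"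
  then obtain f where f: "x = pmul q f" "p dvd fst f" "p dvd fst (snd f)" "p dvd snd (snd f)" by blast
  then obtain r0 r1 r2 where "fst f = p * r0" "fst (snd f) = p * r1" "snd (snd f) = p * r2"
    by (meson dvdE)
  then have "x = (q * p * r0, q * p * r1, q * p * r2)" using f(1) by (simp add: pmul_def mult.assoc)
  then show "x \<in> OJ (pideal (q * p))" unfolding OJ_def pideal_def by blast
qed

lemma dvd_tt: "tt dvd (g :: 'a::field poly) \<longleftrightarrow> poly g 0 = 0"
proof -
  have "tt = [:-0, 1::'a:]" by (simp add: tt_def)
  then show ?thesis by (simp only: poly_eq_0_iff_dvd)
qed

lemma dvd_tt1: "(tt - 1) dvd (g :: 'a::field poly) \<longleftrightarrow> poly g 1 = 0"
proof -
  have "tt - 1 = [:-1, 1::'a:]" by (simp add: tt_def one_pCons)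
  then show ?thesis by (simp only: poly_eq_0_iff_dvd)
qed

lemma dvd_tt2: "(tt * (tt - 1)) dvd (g :: 'a::field poly) \<longleftrightarrow> poly g 0 = 0 \<and> poly g 1 = 0"
  using root2[of g] by (auto elim!: dvdE)

lemma OJ_q: "OJ (pideal (q :: 'a::field poly)) = VV q UNIV"
  using OJ_gen[of q 1] by (simp add: VV_def)

lemma OJ_qt: "OJ (pideal (q * tt :: 'a::field poly)) = VV q ({(0,0,0)} \<times> UNIV)"
  unfolding OJ_gen VV_def dvd_tt by (auto simp: ev_def)

lemma OJ_qt1: "OJ (pideal (q * (tt - 1) :: 'a::field poly)) = VV q (UNIV \<times> {(0,0,0)})"
  unfolding OJ_gen VV_def dvd_tt1 by (auto simp: ev_def)

lemma OJ_M: "OJ (pideal (q * tt * (tt - 1) :: 'a::field poly)) = VV q {((0,0,0),(0,0,0))}"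
  unfolding mult.assoc[of q] OJ_gen VV_def dvd_tt2 by (auto simp: ev_def)

context ctx begin
lemma I_V: "I = VV q (A0 \<times> A1)"
proof (rule set_eqI, rule iffI)
  fix x assume "x \<in> I"
  then obtain f where "x = pmul q f" using I_OJ by blast
  moreover have "ev 0 f \<in> A0 \<and> ev 1 f \<in> A1" using MemI \<open>x \<in> I\<close> calculation by blast
  ultimately show "x \<in> VV q (A0 \<times> A1)" unfolding VV_def by blast
next
  fix x assume "x \<in> VV q (A0 \<times> A1)"
  then show "x \<in> I" using MemI unfolding VV_def by auto
qed
end



lemma caseA:
  fixes q :: "'a::field poly"
  shows "osum (OJ (pideal (q * tt * (tt - 1))))
      (osum (kspan (q * tt, smult s1 (q * tt), 0))
            (kspan (q * (tt - 1), 0, smult s2 (q * (tt - 1)))))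
   = VV q ({(c, 0, c*s2) | c. True} \<times> {(c, c*s1, 0) | c. True})" (is "?L = _")
proof -
  have u: "(q*tt, smult s1 (q*tt), 0) = pmul q (tt, smult s1 tt, 0)" by (simp add: pmul_def)
  have w: "(q*(tt-1), 0, smult s2 (q*(tt-1))) = pmul q (tt-1, 0, smult s2 (tt-1))" by (simp add: pmul_def)
  have "?L = VV q {(a, b). \<exists>c. (vadd a (vsc (-c) (ev 0 (tt-1, 0, smult s2 (tt-1)))), vadd b (vsc (-c) (ev 1 (tt-1, 0, smult s2 (tt-1))))) \<in>
     {(a, b). \<exists>c. (vadd a (vsc (-c) (ev 0 (tt, smult s1 tt, 0))), vadd b (vsc (-c) (ev 1 (tt, smult s1 tt, 0)))) \<in> {((0,0,0),(0,0,0))}}}"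
    by (simp only: u w osum_assoc OJ_M VV_kspan)
  also have "\<dots> = VV q ({(c, 0, c*s2) | c. True} \<times> {(c, c*s1, 0) | c. True})"
    apply (rule arg_cong[where f = "VV q"])
    apply (auto simp: ev_def vadd_def vsc_def add_eq_0_iff)
    done
  finally show ?thesis .
qed

lemma caseB1:
  fixes q :: "'a::field poly"
  shows "osum (OJ (pideal (q * tt * (tt - 1))))
             (osum (osum (kspan (q * tt, 0, 0)) (osum (kspan (0, q * tt, 0)) (kspan (0, 0, q * tt))))
                   (kspan (q * (tt - 1), 0, smult s (q * (tt - 1)))))
   = VV q ({(c, 0, c*s) | c. True} \<times> UNIV)"
proof -
  have u: "(q*tt, 0, 0) = pmul q (tt, 0, 0)" "(0, q*tt, 0) = pmul q (0, tt, 0)" "(0, 0, q*tt) = pmul q (0, 0, tt)"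
    by (simp_all add: pmul_def)
  have w: "(q*(tt-1), 0, smult s (q*(tt-1))) = pmul q (tt-1, 0, smult s (tt-1))" by (simp add: pmul_def)
  show ?thesis
    unfolding u w osum_assoc OJ_M VV_kspan
    apply (rule arg_cong[where f = "VV q"])
    apply (auto simp: ev_def vadd_def vsc_def add_eq_0_iff)
    done
qed

lemma caseB2:
  fixes q :: "'a::field poly"
  shows "osum (OJ (pideal (q * tt))) (kspan (q, 0, smult s q)) = VV q ({(c, 0, c*s) | c. True} \<times> UNIV)"
proof -
  have w: "(q, 0, smult s q) = pmul q (1, 0, [:s:])" by (simp add: pmul_def)
  show ?thesis
    unfolding w OJ_qt VV_kspan
    apply (rule arg_cong[where f = "VV q"])
    apply (auto simp: ev_def vadd_def vsc_def add_eq_0_iff)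
    done
qed

lemma caseC1:
  fixes q :: "'a::field poly"
  shows "osum (OJ (pideal (q * tt * (tt - 1))))
             (osum (kspan (q * tt, smult s (q * tt), 0))
                   (osum (kspan (q * (tt - 1), 0, 0)) (osum (kspan (0, q * (tt - 1), 0)) (kspan (0, 0, q * (tt - 1))))))
   = VV q (UNIV \<times> {(c, c*s, 0) | c. True})"
proof -
  have u: "(q*(tt-1), 0, 0) = pmul q (tt-1, 0, 0)" "(0, q*(tt-1), 0) = pmul q (0, tt-1, 0)"
     "(0, 0, q*(tt-1)) = pmul q (0, 0, tt-1)"
    by (simp_all add: pmul_def)
  have w: "(q*tt, smult s (q*tt), 0) = pmul q (tt, smult s tt, 0)" by (simp add: pmul_def)
  show ?thesis
    unfolding u w osum_assoc OJ_M VV_kspan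
    apply (rule arg_cong[where f = "VV q"])
    apply (auto simp: ev_def vadd_def vsc_def add_eq_0_iff)
    done
qed

lemma caseC2:
  fixes q :: "'a::field poly"
  shows "osum (OJ (pideal (q * (tt - 1)))) (kspan (q, smult s q, 0)) = VV q (UNIV \<times> {(c, c*s, 0) | c. True})"
proof -
  have w: "(q, smult s q, 0) = pmul q (1, [:s:], 0)" by (simp add: pmul_def)
  show ?thesis
    unfolding w OJ_qt1 VV_kspan
    apply (rule arg_cong[where f = "VV q"])
    apply (auto simp: ev_def vadd_def vsc_def add_eq_0_iff)
    done
qed

theorem proposition4p10:
  fixes I :: "('a::field) onsager set" and q :: "'a poly"
  assumes char: "(2::'a) \<noteq> 0"
    and cl: "closed_ideal I"
    and J: "J_of I = pideal q"
    and nz: "pideal q \<noteq> {0}"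
  shows
   "(\<exists>s1 s2. s1 \<in> {1, -1} \<and> s2 \<in> {1, -1} \<and>
       I = osum (OJ (pideal (q * tt * (tt - 1))))
             (osum (kspan (q * tt, smult s1 (q * tt), 0))
                   (kspan (q * (tt - 1), 0, smult s2 (q * (tt - 1))))))
    \<or> (\<exists>s. s \<in> {1, -1} \<and>
       I = osum (OJ (pideal (q * tt * (tt - 1))))
             (osum (osum (kspan (q * tt, 0, 0)) (osum (kspan (0, q * tt, 0)) (kspan (0, 0, q * tt))))
                   (kspan (q * (tt - 1), 0, smult s (q * (tt - 1))))) \<and>
       I = osum (OJ (pideal (q * tt))) (kspan (q, 0, smult s q)))
    \<or> (\<exists>s. s \<in> {1, -1} \<and>
       I = osum (OJ (pideal (q * tt * (tt - 1))))
             (osum (kspan (q * tt, smult s (q * tt), 0))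
                   (osum (kspan (q * (tt - 1), 0, 0)) (osum (kspan (0, q * (tt - 1), 0)) (kspan (0, 0, q * (tt - 1)))))) \<and>
       I = osum (OJ (pideal (q * (tt - 1)))) (kspan (q, smult s q, 0)))
    \<or> I = OJ (pideal q)"
proof -
  interpret ctx I q using cl J nz by unfold_locales
  have IV: "I = VV q (A0 \<times> A1)" by (rule I_V)
  have c0: "A0 = UNIV \<or> (\<exists>s\<in>{1,-1}. A0 = {(c, 0, c*s) | c. True})"
    by (rule cls0[OF A0_add A0_sc A0_br A0_cl A_ex(1)])
  have c1: "A1 = UNIV \<or> (\<exists>s\<in>{1,-1}. A1 = {(c, c*s, 0) | c. True})"
    by (rule cls1[OF A1_add A1_sc A1_br A1_cl A_ex(2)])
  from c0 show ?thesis
  proof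
    assume a0: "A0 = UNIV"
    from c1 show ?thesis
    proof
      assume a1: "A1 = UNIV"
      have "I = OJ (pideal q)" using IV a0 a1 by (simp add: OJ_q)
      then show ?thesis by blast
    next
      assume "\<exists>s\<in>{1,-1}. A1 = {(c, c*s, 0) | c. True}"
      then obtain s where s: "s \<in> {1,-1}" and a1: "A1 = {(c, c*s, 0) | c. True}" by blast
      have "I = osum (OJ (pideal (q * tt * (tt - 1))))
             (osum (kspan (q * tt, smult s (q * tt), 0))
                   (osum (kspan (q * (tt - 1), 0, 0)) (osum (kspan (0, q * (tt - 1), 0)) (kspan (0, 0, q * (tt - 1))))))"
        using IV a0 a1 by (simp add: caseC1)
      moreover have "I = osum (OJ (pideal (q * (tt - 1)))) (kspan (q, smult s q, 0))"
        using IV a0 a1 by (simp add: caseC2)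
      ultimately show ?thesis using s by blast
    qed
  next
    assume "\<exists>s\<in>{1,-1}. A0 = {(c, 0, c*s) | c. True}"
    then obtain s2 where s2: "s2 \<in> {1,-1}" and a0: "A0 = {(c, 0, c*s2) | c. True}" by blast
    from c1 show ?thesis
    proof
      assume a1: "A1 = UNIV"
      have "I = osum (OJ (pideal (q * tt * (tt - 1))))
             (osum (osum (kspan (q * tt, 0, 0)) (osum (kspan (0, q * tt, 0)) (kspan (0, 0, q * tt))))
                   (kspan (q * (tt - 1), 0, smult s2 (q * (tt - 1)))))"
        using IV a0 a1 by (simp add: caseB1)
      moreover have "I = osum (OJ (pideal (q * tt))) (kspan (q, 0, smult s2 q))"
        using IV a0 a1 by (simp add: caseB2)
      ultimately show ?thesis using s2 by blast
    next
      assume "\<exists>s\<in>{1,-1}. A1 = {(c, c*s, 0) | c. True}"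
      then obtain s1 where s1: "s1 \<in> {1,-1}" and a1: "A1 = {(c, c*s1, 0) | c. True}" by blast
      have "I = osum (OJ (pideal (q * tt * (tt - 1))))
             (osum (kspan (q * tt, smult s1 (q * tt), 0))
                   (kspan (q * (tt - 1), 0, smult s2 (q * (tt - 1)))))"
        using IV a0 a1 by (simp add: caseA)
      then show ?thesis using s1 s2 by blast
    qed
  qed
qed

end
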